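(* Let $f\in{\rm elh}(\mathbb{C})$ be non-polynomial and $g\in{\rm elh}(\mathbb{C})$, and suppose there is $h_1\in{\rm elh}(\mathbb{C})$ with $h_1\neq g$ and $f\circ h_1=f\circ g$. Let $t(z)$ be entire and $h(z,w)$ entire on $\mathbb{C}^2$ with $f(g(z)+we^{t(z)})=f(g(z))+e^{h(z,w)}\sin\pi w$ for all $(z,w)$. Then there exists an entire function $k(z,w)$ on $\mathbb{C}^2$ such that $$\frac{\partial h}{\partial w}(z,w)\sin\pi w+\pi\cos\pi w=e^{k(z,w)}.$$
   Context: ${\rm elh}(\mathbb{C})$ denotes the set of entire functions with nowhere vanishing derivative and derivative $1$ at $0$. *)

theory Defs
  imports "HOL-Complex_Analysis.Complex_Analysis" "HOL-Computational_Algebra.Polynomial"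
begin

definition elh :: "(complex \<Rightarrow> complex) set" where
  "elh = {f. f holomorphic_on UNIV \<and> (\<forall>z. deriv f z \<noteq> 0) \<and> deriv f 0 = 1}"

definition is_polynomial_fun :: "(complex \<Rightarrow> complex) \<Rightarrow> bool" where
  "is_polynomial_fun f \<longleftrightarrow> (\<exists>p :: complex poly. \<forall>z. f z = poly p z)"

definition entire2 :: "(complex \<times> complex \<Rightarrow> complex) \<Rightarrow> bool" where
  "entire2 h \<longleftrightarrow> (\<forall>p. \<exists>a b. (h has_derivative (\<lambda>(u, v). a * u + b * v)) (at p))"

end

theory Submission
  imports Defs
begin

lemma entire2_const: "entire2 (\<lambda>p. c)"
  unfolding entire2_def
  by (intro allI exI[of _ 0]) (auto intro: has_derivative_eq_rhs[OF has_derivative_const])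

lemma entire2_fst: "entire2 fst"
  unfolding entire2_def
proof (intro allI exI)
  fix p :: "complex \<times> complex"
  show "(fst has_derivative (\<lambda>(u, v). 1 * u + 0 * v)) (at p)"
    by (rule has_derivative_eq_rhs[OF has_derivative_fst[OF has_derivative_ident]]) auto
qed

lemma entire2_snd: "entire2 snd"
  unfolding entire2_def
proof (intro allI exI)
  fix p :: "complex \<times> complex"
  show "(snd has_derivative (\<lambda>(u, v). 0 * u + 1 * v)) (at p)"
    by (rule has_derivative_eq_rhs[OF has_derivative_snd[OF has_derivative_ident]]) auto
qed

lemma entire2_add:
  assumes "entire2 a" "entire2 b" shows "entire2 (\<lambda>p. a p + b p)"
  unfolding entire2_def
proof
  fix p
  obtain a1 b1 where A: "(a has_derivative (\<lambda>(u, v). a1 * u + b1 * v)) (at p)"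
    using assms(1) unfolding entire2_def by blast
  obtain a2 b2 where B: "(b has_derivative (\<lambda>(u, v). a2 * u + b2 * v)) (at p)"
    using assms(2) unfolding entire2_def by blast
  show "\<exists>c d. ((\<lambda>p. a p + b p) has_derivative (\<lambda>(u, v). c * u + d * v)) (at p)"
    by (rule exI[of _ "a1+a2"], rule exI[of _ "b1+b2"],
        rule has_derivative_eq_rhs[OF has_derivative_add[OF A B]]) (auto simp: algebra_simps)
qed

lemma entire2_diff:
  assumes "entire2 a" "entire2 b" shows "entire2 (\<lambda>p. a p - b p)"
  unfolding entire2_def
proof
  fix p
  obtain a1 b1 where A: "(a has_derivative (\<lambda>(u, v). a1 * u + b1 * v)) (at p)"
    using assms(1) unfolding entire2_def by blast
  obtain a2 b2 where B: "(b has_derivative (\<lambda>(u, v). a2 * u + b2 * v)) (at p)"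
    using assms(2) unfolding entire2_def by blast
  show "\<exists>c d. ((\<lambda>p. a p - b p) has_derivative (\<lambda>(u, v). c * u + d * v)) (at p)"
    by (rule exI[of _ "a1-a2"], rule exI[of _ "b1-b2"],
        rule has_derivative_eq_rhs[OF has_derivative_diff[OF A B]]) (auto simp: algebra_simps)
qed

lemma entire2_mult:
  assumes "entire2 a" "entire2 b" shows "entire2 (\<lambda>p. a p * b p)"
  unfolding entire2_def
proof
  fix p
  obtain a1 b1 where A: "(a has_derivative (\<lambda>(u, v). a1 * u + b1 * v)) (at p)"
    using assms(1) unfolding entire2_def by blast
  obtain a2 b2 where B: "(b has_derivative (\<lambda>(u, v). a2 * u + b2 * v)) (at p)"
    using assms(2) unfolding entire2_def by blast
  show "\<exists>c d. ((\<lambda>p. a p * b p) has_derivative (\<lambda>(u, v). c * u + d * v)) (at p)"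
    by (rule exI[of _ "a p * a2 + a1 * b p"], rule exI[of _ "a p * b2 + b1 * b p"],
        rule has_derivative_eq_rhs[OF has_derivative_mult[OF A B]]) (auto simp: algebra_simps)
qed

lemma entire2_comp:
  assumes F: "F holomorphic_on UNIV" and "entire2 a" shows "entire2 (\<lambda>p. F (a p))"
  unfolding entire2_def
proof
  fix p
  obtain a1 b1 where A: "(a has_derivative (\<lambda>(u, v). a1 * u + b1 * v)) (at p)"
    using assms(2) unfolding entire2_def by blast
  have "(F has_field_derivative deriv F (a p)) (at (a p))"
    using holomorphic_derivI[OF F] by auto
  then have D: "(F has_derivative (*) (deriv F (a p))) (at (a p))"
    by (rule has_field_derivative_imp_has_derivative)
  show "\<exists>c d. ((\<lambda>p. F (a p)) has_derivative (\<lambda>(u, v). c * u + d * v)) (at p)"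
    by (rule exI[of _ "deriv F (a p) * a1"], rule exI[of _ "deriv F (a p) * b1"],
        rule has_derivative_eq_rhs[OF diff_chain_at[OF A D, unfolded o_def]])
       (auto simp: algebra_simps)
qed

theorem proposition3p26:
  fixes f g h1 t :: "complex \<Rightarrow> complex" and h :: "complex \<times> complex \<Rightarrow> complex"
  assumes "f \<in> elh" and "\<not> is_polynomial_fun f" and "g \<in> elh"
    and "h1 \<in> elh" and "h1 \<noteq> g" and "f \<circ> h1 = f \<circ> g"
    and "t holomorphic_on UNIV" and "entire2 h"
    and "\<And>z (w::complex). f (g z + w * exp (t z)) = f (g z) + exp (h (z, w)) * sin (pi * w)"
  shows "\<exists>k. entire2 k \<and>
    (\<forall>z (w::complex). deriv (\<lambda>w'. h (z, w')) w * sin (pi * w) + pi * cos (pi * w) = exp (k (z, w)))"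
proof -
  have fh: "f holomorphic_on UNIV" and fnz: "\<And>z. deriv f z \<noteq> 0"
    using assms(1) by (auto simp: elh_def)
  have gh: "g holomorphic_on UNIV" using assms(3) by (auto simp: elh_def)
  have dfh: "deriv f holomorphic_on UNIV" using holomorphic_deriv[OF fh] by auto
  obtain \<phi> where \<phi>h: "\<phi> holomorphic_on UNIV" and \<phi>e: "\<And>x. exp (\<phi> x) = deriv f x"
    using holomorphic_logarithm_exists[of UNIV "deriv f" 0] dfh fnz by auto
  have eh: "(\<lambda>x. exp x) holomorphic_on UNIV" by (intro holomorphic_intros)
  define k where "k = (\<lambda>p. \<phi> (g (fst p) + snd p * exp (t (fst p))) + t (fst p) - h p)"
  have "entire2 k"
    unfolding k_def
    by (intro entire2_diff entire2_add entire2_comp[OF \<phi>h] entire2_comp[OF gh]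
        entire2_mult entire2_snd entire2_comp[OF eh] entire2_comp[OF assms(7)]
        entire2_fst assms(8))
  moreover have "\<forall>z (w::complex). deriv (\<lambda>w'. h (z, w')) w * sin (pi * w) + pi * cos (pi * w) = exp (k (z, w))"
  proof (intro allI)
    fix z w :: complex
    obtain a1 b1 where A: "(h has_derivative (\<lambda>(u, v). a1 * u + b1 * v)) (at (z, w))"
      using assms(8) unfolding entire2_def by blast
    have P: "((\<lambda>w'. (z, w')) has_derivative (\<lambda>v. (0, v))) (at w)"
      by (rule has_derivative_eq_rhs[OF has_derivative_Pair[OF has_derivative_const has_derivative_ident]]) auto
    have "((\<lambda>w'. h (z, w')) has_derivative (*) b1) (at w)"
      by (rule has_derivative_eq_rhs[OF diff_chain_at[OF P A, unfolded o_def]]) auto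
    then have Hd: "((\<lambda>w'. h (z, w')) has_field_derivative b1) (at w)"
      by (simp add: has_field_derivative_def mult.commute)
    have dH: "deriv (\<lambda>w'. h (z, w')) w = b1" using DERIV_imp_deriv[OF Hd] .
    have fd: "(f has_field_derivative deriv f (g z + w * exp (t z))) (at (g z + w * exp (t z)))"
      using holomorphic_derivI[OF fh] by auto
    have L: "((\<lambda>w. f (g z + w * exp (t z))) has_field_derivative
        deriv f (g z + w * exp (t z)) * exp (t z)) (at w)"
    proof -
      have gd: "((\<lambda>w. g z + w * exp (t z)) has_field_derivative exp (t z)) (at w)"
        by (auto intro!: derivative_eq_intros)
      show ?thesis using DERIV_chain2[where f=f and g="\<lambda>w. g z + w * exp (t z)", OF fd gd] .
    qed
    have R: "((\<lambda>w. f (g z) + exp (h (z, w)) * sin (pi * w)) has_field_derivative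
        exp (h (z, w)) * b1 * sin (pi * w) + exp (h (z, w)) * (cos (pi * w) * pi)) (at w)"
      by (auto intro!: derivative_eq_intros Hd)
    have eqf: "(\<lambda>w::complex. f (g z + w * exp (t z))) = (\<lambda>w::complex. f (g z) + exp (h (z, w)) * sin (pi * w))"
      using assms(9) by auto
    have E: "deriv f (g z + w * exp (t z)) * exp (t z) =
        exp (h (z, w)) * b1 * sin (pi * w) + exp (h (z, w)) * (cos (pi * w) * pi)"
      using DERIV_unique[OF L R[folded eqf]] .
    have "exp (k (z, w)) = deriv f (g z + w * exp (t z)) * exp (t z) / exp (h (z, w))"
      by (simp add: k_def exp_diff exp_add \<phi>e)
    also have "\<dots> = b1 * sin (pi * w) + pi * cos (pi * w)"
      unfolding E by (simp add: field_simps)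
    finally show "deriv (\<lambda>w'. h (z, w')) w * sin (pi * w) + pi * cos (pi * w) = exp (k (z, w))"
      by (simp add: dH)
  qed
  ultimately show ?thesis by blast
qed

end
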